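(* Consider the two-user, two-file broadcast caching network with correlated sources described in the context, with library generated by a 2-component discrete memoryless source $(\mathsf X_1,\mathsf X_2)\sim p(x_1,x_2)$ and (normalized) cache capacity $M\ge 0$ per receiver. Then the optimal peak rate-memory function satisfies $R^*(M)\ge R^{LB}(M)$, where \[ R^{LB}(M)=\inf\Big\{R:\; R\ge H(\mathsf X_1,\mathsf X_2)-2M,\;\; R\ge \tfrac12\big(H(\mathsf X_1,\mathsf X_2)-M\big),\;\; R\ge \tfrac12\Big(H(\mathsf X_1,\mathsf X_2)+\max\{H(\mathsf X_1),H(\mathsf X_2)\}\Big)-M\Big\}. \]
   Context: A 2-component discrete memoryless source (2-DMS) consists of finite alphabets $\mathcal X_1,\mathcal X_2$ and a joint pmf $p(x_1,x_2)$; it generates an i.i.d. process $\{(\mathsf X_{1i},\mathsf X_{2i})\}$ with $(\mathsf X_1,\mathsf X_2)\sim p$. For block length $n$ the library consists of the two files $X_1^n\in\mathcal X_1^n$ and $X_2^n\in\mathcal X_2^n$. One sender is connected to two receivers $r_1,r_2$ through a shared error-free broadcast link; each receiver has a cache of $nM$ bits. A cache-aided coded multicast (CACM) scheme of block length $n$ consists of: cache encoders $f^{\mathfrak C}_{r_i}:\mathcal X_1^n\times\mathcal X_2^n\to[1:2^{nM})$, giving cache contents $Z_{r_i}=f^{\mathfrak C}_{r_i}(X_1^n,X_2^n)$, $i=1,2$ (chosen before demands are known); for each demand vector $\mathbf d=(d_{r_1},d_{r_2})\in\{1,2\}^2$ (receiver $r_i$ requests file $X^n_{d_{r_i}}$),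 a multicast encoder producing a variable-length binary codeword $Y_{\mathbf d}=f^{\mathfrak M}(\mathbf d,Z_{r_1},Z_{r_2},X_1^n,X_2^n)$; and decoders $\widehat X^n_{d_{r_i}}=g^{\mathfrak M}_{r_i}(\mathbf d,Y_{\mathbf d},Z_{r_i})$. The worst-case error probability is $P_e^{(n)}=\max_{\mathbf d}\max_{i}\mathbb P(\widehat X^n_{d_{r_i}}\ne X^n_{d_{r_i}})$ and the peak rate is $R^{(n)}=\max_{\mathbf d}\mathbb E[L(Y_{\mathbf d})]/n$, where $L(\cdot)$ is codeword length in bits and the expectation is over the library. A pair $(R,M)$ is achievable if there is a sequence of CACM schemes with cache capacity $M$ and increasing $n$ such that $P_e^{(n)}\to0$ and $\limsup_n R^{(n)}\le R$. The peak rate-memory region is the closure of the set of achievable pairs, and $R^*(M)=\inf\{R:(R,M)\text{ in this region}\}$. *)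

theory Defs
  imports "HOL-Analysis.Analysis" "HOL-Probability.Probability_Mass_Function"
begin

definition entropy_pmf :: "'c::finite pmf \<Rightarrow> real" where
  "entropy_pmf q = - (\<Sum>x\<in>UNIV. pmf q x * log 2 (pmf q x))"

text \<open>Block-length n realisations of the 2-DMS: a list of n symbol pairs;
  the files are X1^n = map fst xs and X2^n = map snd xs. i.i.d. weight.\<close>
definition seqs :: "nat \<Rightarrow> ('a \<times> 'b) list set" where
  "seqs n = {xs. length xs = n}"

definition wt :: "('a \<times> 'b) pmf \<Rightarrow> ('a \<times> 'b) list \<Rightarrow> real" where
  "wt p xs = prod_list (map (pmf p) xs)"

definition prob_lib :: "('a \<times> 'b) pmf \<Rightarrow> nat \<Rightarrow> ('a list \<Rightarrow> 'b list \<Rightarrow> bool) \<Rightarrow> real" where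
  "prob_lib p n E = (\<Sum>xs\<in>seqs n. if E (map fst xs) (map snd xs) then wt p xs else 0)"

definition expect_lib :: "('a \<times> 'b) pmf \<Rightarrow> nat \<Rightarrow> ('a list \<Rightarrow> 'b list \<Rightarrow> real) \<Rightarrow> real" where
  "expect_lib p n f = (\<Sum>xs\<in>seqs n. wt p xs * f (map fst xs) (map snd xs))"

text \<open>Receivers are indexed by i \<in> {1,2}, demand vectors
  d = (d_r1, d_r2) \<in> {1,2}^2. The decoder of receiver i outputs a pair, of which
  the component for the requested file is the estimate.\<close>
record ('a, 'b) cacm =
  cache :: "nat \<Rightarrow> 'a list \<Rightarrow> 'b list \<Rightarrow> nat"
  mcast :: "nat \<times> nat \<Rightarrow> nat \<Rightarrow> nat \<Rightarrow> 'a list \<Rightarrow> 'b list \<Rightarrow> bool list"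
  dec :: "nat \<Rightarrow> nat \<times> nat \<Rightarrow> bool list \<Rightarrow> nat \<Rightarrow> 'a list \<times> 'b list"

definition demands :: "(nat \<times> nat) set" where
  "demands = {1,2} \<times> {1,2}"

definition req :: "nat \<times> nat \<Rightarrow> nat \<Rightarrow> nat" where
  "req d i = (if i = 1 then fst d else snd d)"

text \<open>Cache capacity nM bits: cache index in {1,...,floor(2^(nM))}.\<close>
definition valid_cacm :: "nat \<Rightarrow> real \<Rightarrow> ('a, 'b) cacm \<Rightarrow> bool" where
  "valid_cacm n M S \<longleftrightarrow> (\<forall>i\<in>{1,2}. \<forall>xs\<in>seqs n.
      1 \<le> cache S i (map fst xs) (map snd xs) \<and>
      real (cache S i (map fst xs) (map snd xs)) \<le> 2 powr (real n * M))"

definition codeword :: "('a, 'b) cacm \<Rightarrow> nat \<times> nat \<Rightarrow> 'a list \<Rightarrow> 'b list \<Rightarrow> bool list" where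
  "codeword S d x1 x2 = mcast S d (cache S 1 x1 x2) (cache S 2 x1 x2) x1 x2"

definition err_event :: "('a, 'b) cacm \<Rightarrow> nat \<times> nat \<Rightarrow> nat \<Rightarrow> 'a list \<Rightarrow> 'b list \<Rightarrow> bool" where
  "err_event S d i x1 x2 =
     (let out = dec S i d (codeword S d x1 x2) (cache S i x1 x2)
      in if req d i = 1 then fst out \<noteq> x1 else snd out \<noteq> x2)"

definition Pe :: "('a \<times> 'b) pmf \<Rightarrow> nat \<Rightarrow> ('a, 'b) cacm \<Rightarrow> real" where
  "Pe p n S = Max ((\<lambda>(d, i). prob_lib p n (err_event S d i)) ` (demands \<times> {1,2}))"

definition rate :: "('a \<times> 'b) pmf \<Rightarrow> nat \<Rightarrow> ('a, 'b) cacm \<Rightarrow> real" where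
  "rate p n S = Max ((\<lambda>d. expect_lib p n (\<lambda>x1 x2. real (length (codeword S d x1 x2))) / real n) ` demands)"

definition achievable :: "('a \<times> 'b) pmf \<Rightarrow> real \<Rightarrow> real \<Rightarrow> bool" where
  "achievable p R M \<longleftrightarrow> (\<exists>(nn :: nat \<Rightarrow> nat) (S :: nat \<Rightarrow> ('a, 'b) cacm).
      strict_mono nn \<and> (\<forall>k. valid_cacm (nn k) M (S k)) \<and>
      (\<lambda>k. Pe p (nn k) (S k)) \<longlonglongrightarrow> 0 \<and>
      limsup (\<lambda>k. ereal (rate p (nn k) (S k))) \<le> ereal R)"

definition region :: "('a \<times> 'b) pmf \<Rightarrow> (real \<times> real) set" where
  "region p = closure {(R, M). achievable p R M}"

definition Rstar :: "('a \<times> 'b) pmf \<Rightarrow> real \<Rightarrow> ereal" where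
  "Rstar p M = Inf (ereal ` {R. (R, M) \<in> region p})"

definition RLB :: "('a::finite \<times> 'b::finite) pmf \<Rightarrow> real \<Rightarrow> real" where
  "RLB p M = Inf {R. R \<ge> entropy_pmf p - 2 * M \<and>
                     R \<ge> (entropy_pmf p - M) / 2 \<and>
                     R \<ge> (entropy_pmf p + max (entropy_pmf (map_pmf fst p)) (entropy_pmf (map_pmf snd p))) / 2 - M}"

end

theory Submission
  imports Defs "HOL-Real_Asymp.Real_Asymp"
begin

definition Pr :: "'x set \<Rightarrow> ('x \<Rightarrow> real) \<Rightarrow> ('x \<Rightarrow> 'v) \<Rightarrow> 'v \<Rightarrow> real" where
  "Pr Om w f v = (\<Sum>x\<in>Om. if f x = v then w x else 0)"

definition ent :: "'x set \<Rightarrow> ('x \<Rightarrow> real) \<Rightarrow> ('x \<Rightarrow> 'v) \<Rightarrow> real" where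
  "ent Om w f = - (\<Sum>v\<in>f ` Om. Pr Om w f v * log 2 (Pr Om w f v))"

locale finprob =
  fixes Om :: "'x set" and w :: "'x \<Rightarrow> real"
  assumes fin: "finite Om" and wnn: "\<And>x. x \<in> Om \<Longrightarrow> w x \<ge> 0" and wsum: "sum w Om = 1"
begin

lemma Pr_nonneg: "Pr Om w f v \<ge> 0"
  unfolding Pr_def by (rule sum_nonneg) (auto intro: wnn)

lemma Pr_alt: "Pr Om w f v = sum w {x\<in>Om. f x = v}"
  unfolding Pr_def using fin by (simp add: sum.inter_filter)

lemma Pr_ge: "x \<in> Om \<Longrightarrow> Pr Om w f (f x) \<ge> w x"
proof -
  assume x: "x \<in> Om"
  have "sum w {x} \<le> sum w {y\<in>Om. f y = f x}"
    by (rule sum_mono2) (use fin x wnn in auto)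
  then show ?thesis by (simp add: Pr_alt)
qed

lemma Pr_pos: "x \<in> Om \<Longrightarrow> w x > 0 \<Longrightarrow> Pr Om w f (f x) > 0"
  using Pr_ge[of x f] by linarith

lemma sum_by_val: "(\<Sum>x\<in>Om. w x * g (f x)) = (\<Sum>v\<in>f ` Om. Pr Om w f v * g v)"
proof -
  have "(\<Sum>x\<in>Om. w x * g (f x)) = (\<Sum>v\<in>f ` Om. \<Sum>x\<in>{x\<in>Om. f x = v}. w x * g (f x))"
    using fin by (rule sum.image_gen)
  also have "\<dots> = (\<Sum>v\<in>f ` Om. Pr Om w f v * g v)"
    by (rule sum.cong) (auto simp: Pr_alt sum_distrib_right)
  finally show ?thesis .
qed

lemma ent_alt: "ent Om w f = - (\<Sum>x\<in>Om. w x * log 2 (Pr Om w f (f x)))"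
  unfolding ent_def using sum_by_val[of "\<lambda>v. log 2 (Pr Om w f v)" f] by simp

lemma sum_Pr: "(\<Sum>v\<in>f ` Om. Pr Om w f v) = 1"
  using sum_by_val[of "\<lambda>v. 1" f] wsum by simp

lemma ent_cong:
  assumes "\<And>x y. x \<in> Om \<Longrightarrow> y \<in> Om \<Longrightarrow> f x = f y \<longleftrightarrow> g x = g y"
  shows "ent Om w f = ent Om w g"
proof -
  have "Pr Om w f (f x) = Pr Om w g (g x)" if "x \<in> Om" for x
    unfolding Pr_alt using assms that by (intro arg_cong[where f="sum w"]) auto
  then show ?thesis unfolding ent_alt by (simp cong: sum.cong)
qed

lemma ent_mono:
  assumes "\<And>x y. x \<in> Om \<Longrightarrow> y \<in> Om \<Longrightarrow> g x = g y \<Longrightarrow> f x = f y"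
  shows "ent Om w f \<le> ent Om w g"
proof -
  have "w x * log 2 (Pr Om w g (g x)) \<le> w x * log 2 (Pr Om w f (f x))" if x: "x \<in> Om" for x
  proof (cases "w x > 0")
    case True
    have sub: "{y\<in>Om. g y = g x} \<subseteq> {y\<in>Om. f y = f x}"
      using assms x by blast
    have "Pr Om w g (g x) \<le> Pr Om w f (f x)"
      unfolding Pr_alt by (rule sum_mono2[OF _ sub]) (use fin wnn in auto)
    then show ?thesis using True Pr_pos[OF x True, of g] by (intro mult_left_mono) auto
  next
    case False
    then have "w x = 0" using wnn x by force
    then show ?thesis by simp
  qed
  then have "(\<Sum>x\<in>Om. w x * log 2 (Pr Om w g (g x))) \<le> (\<Sum>x\<in>Om. w x * log 2 (Pr Om w f (f x)))"
    by (rule sum_mono)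
  then show ?thesis unfolding ent_alt by linarith
qed

lemma gibbs_term:
  fixes P q :: real
  assumes "P \<ge> 0" "q \<ge> 0" "P > 0 \<Longrightarrow> q > 0"
  shows "P * (log 2 q - log 2 P) \<le> (q - P) / ln 2"
proof (cases "P > 0")
  case True
  then have q: "q > 0" using assms by auto
  have "log 2 q - log 2 P = ln (q / P) / ln 2"
    using True q by (simp add: log_def ln_div diff_divide_distrib)
  also have "\<dots> \<le> (q / P - 1) / ln 2"
    using ln_le_minus_one[of "q/P"] True q by (intro divide_right_mono) auto
  finally have "P * (log 2 q - log 2 P) \<le> P * ((q / P - 1) / ln 2)"
    using True by (intro mult_left_mono) auto
  also have "\<dots> = (q - P) / ln 2" using True by (simp add: field_simps)
  finally show ?thesis .
next
  case False
  then have "P = 0" using assms by auto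
  then show ?thesis using assms by simp
qed

lemma gibbs:
  assumes qnn: "\<And>v. v \<in> f ` Om \<Longrightarrow> q v \<ge> 0"
    and qpos: "\<And>x. x \<in> Om \<Longrightarrow> w x > 0 \<Longrightarrow> q (f x) > 0"
    and qsum: "(\<Sum>v\<in>f ` Om. q v) \<le> 1"
  shows "ent Om w f \<le> - (\<Sum>x\<in>Om. w x * log 2 (q (f x)))"
proof -
  have pq: "q v > 0" if v: "v \<in> f ` Om" and pp: "Pr Om w f v > 0" for v
  proof -
    from pp have nz: "sum w {x\<in>Om. f x = v} \<noteq> 0" by (simp add: Pr_alt)
    have "\<exists>x\<in>{x\<in>Om. f x = v}. w x \<noteq> 0" proof (rule ccontr)
      assume "\<not> (\<exists>x\<in>{x\<in>Om. f x = v}. w x \<noteq> 0)"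
      then have "\<forall>x\<in>{x\<in>Om. f x = v}. w x = 0" by blast
      then have "sum w {x\<in>Om. f x = v} = 0" by (rule sum.neutral)
      then show False using nz by simp
    qed
    then obtain x where x: "x \<in> Om" "f x = v" "w x \<noteq> 0" by blast
    then have "w x > 0" using wnn[of x] by linarith
    then show "q v > 0" using qpos[OF x(1)] x(2) by simp
  qed
  have "(\<Sum>v\<in>f ` Om. Pr Om w f v * (log 2 (q v) - log 2 (Pr Om w f v)))
        \<le> (\<Sum>v\<in>f ` Om. (q v - Pr Om w f v) / ln 2)"
  proof (rule sum_mono)
    fix v assume v: "v \<in> f ` Om"
    show "Pr Om w f v * (log 2 (q v) - log 2 (Pr Om w f v)) \<le> (q v - Pr Om w f v) / ln 2"
      by (rule gibbs_term[OF Pr_nonneg qnn[OF v] pq[OF v]])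
  qed
  also have "\<dots> = ((\<Sum>v\<in>f ` Om. q v) - (\<Sum>v\<in>f ` Om. Pr Om w f v)) / ln 2"
    by (simp only: sum_divide_distrib[symmetric] sum_subtractf)
  also have "\<dots> = ((\<Sum>v\<in>f ` Om. q v) - 1) / ln 2"
    by (simp only: sum_Pr)
  also have "\<dots> \<le> 0" using qsum by (intro divide_nonpos_pos) auto
  finally have "(\<Sum>v\<in>f ` Om. Pr Om w f v * log 2 (q v)) - (\<Sum>v\<in>f ` Om. Pr Om w f v * log 2 (Pr Om w f v)) \<le> 0"
    by (simp only: right_diff_distrib sum_subtractf)
  moreover have "(\<Sum>x\<in>Om. w x * log 2 (q (f x))) = (\<Sum>v\<in>f ` Om. Pr Om w f v * log 2 (q v))"
    by (rule sum_by_val)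
  ultimately show ?thesis unfolding ent_def by linarith
qed

lemma marg:
  "(\<Sum>a\<in>f ` Om. Pr Om w (\<lambda>x. (f x, h x)) (a, c)) = Pr Om w h c"
proof -
  have "(\<Sum>a\<in>f ` Om. Pr Om w (\<lambda>x. (f x, h x)) (a, c))
      = (\<Sum>x\<in>Om. \<Sum>a\<in>f ` Om. if a = f x then (if h x = c then w x else 0) else 0)"
    unfolding Pr_def by (subst sum.swap) (auto intro!: sum.cong)
  also have "\<dots> = (\<Sum>x\<in>Om. if h x = c then w x else 0)"
    using fin by (intro sum.cong refl) (simp only: sum.delta finite_imageI, simp)
  finally show ?thesis unfolding Pr_def .
qed

lemma Pr_const: "Pr Om w (\<lambda>x. c) c = 1"
  unfolding Pr_def using wsum by simp

lemma ent_const: "ent Om w (\<lambda>x. c) = 0"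
  unfolding ent_alt Pr_const by simp

lemma submod:
  "ent Om w (\<lambda>x. (f x, g x, h x)) + ent Om w h
     \<le> ent Om w (\<lambda>x. (f x, h x)) + ent Om w (\<lambda>x. (g x, h x))"
proof -
  define Pfh where "Pfh = Pr Om w (\<lambda>x. (f x, h x))"
  define Pgh where "Pgh = Pr Om w (\<lambda>x. (g x, h x))"
  define Ph where "Ph = Pr Om w h"
  define q where "q v = Pfh (fst v, snd (snd v)) * Pgh (fst (snd v), snd (snd v)) / Ph (snd (snd v))" for v
  let ?F = "\<lambda>x. (f x, g x, h x)"
  have qnn: "q v \<ge> 0" for v unfolding q_def Pfh_def Pgh_def Ph_def by (simp add: Pr_nonneg)
  have "(\<Sum>v\<in>?F ` Om. q v) \<le> (\<Sum>v\<in>f ` Om \<times> (g ` Om \<times> h ` Om). q v)"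
    by (rule sum_mono2) (use fin qnn in auto)
  also have "\<dots> = (\<Sum>a\<in>f ` Om. \<Sum>b\<in>g ` Om. \<Sum>c\<in>h ` Om. q (a, b, c))"
    by (simp add: sum.cartesian_product)
  also have "\<dots> = (\<Sum>c\<in>h ` Om. \<Sum>a\<in>f ` Om. \<Sum>b\<in>g ` Om. q (a, b, c))"
    by (subst sum.swap, subst (2) sum.swap, rule refl)
  also have "\<dots> = (\<Sum>c\<in>h ` Om. (\<Sum>a\<in>f ` Om. Pfh (a, c)) * (\<Sum>b\<in>g ` Om. Pgh (b, c)) / Ph c)"
    unfolding q_def by (intro sum.cong refl) (simp add: sum_product sum_divide_distrib)
  also have "\<dots> = (\<Sum>c\<in>h ` Om. Ph c)"
    unfolding Pfh_def Pgh_def Ph_def marg by simp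
  also have "\<dots> = 1" unfolding Ph_def by (rule sum_Pr)
  finally have qsum: "(\<Sum>v\<in>?F ` Om. q v) \<le> 1" .
  have qpos: "q (?F x) > 0" if "x \<in> Om" "w x > 0" for x
  proof -
    have "Pfh (f x, h x) > 0" "Pgh (g x, h x) > 0" "Ph (h x) > 0"
      using Pr_pos[OF that] unfolding Pfh_def Pgh_def Ph_def by auto
    then show ?thesis unfolding q_def by simp
  qed
  have G: "ent Om w ?F \<le> - (\<Sum>x\<in>Om. w x * log 2 (q (?F x)))"
    by (rule gibbs) (use qnn qpos qsum in auto)
  have "w x * log 2 (q (?F x)) = w x * log 2 (Pfh (f x, h x)) + w x * log 2 (Pgh (g x, h x)) - w x * log 2 (Ph (h x))"
    if x: "x \<in> Om" for x
  proof (cases "w x > 0")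
    case True
    have p: "Pfh (f x, h x) > 0" "Pgh (g x, h x) > 0" "Ph (h x) > 0"
      using Pr_pos[OF x True] unfolding Pfh_def Pgh_def Ph_def by auto
    then show ?thesis unfolding q_def
      by (simp add: log_divide_pos log_mult_pos algebra_simps)
  next
    case False
    then have "w x = 0" using wnn x by force
    then show ?thesis by simp
  qed
  then have "(\<Sum>x\<in>Om. w x * log 2 (q (?F x))) = (\<Sum>x\<in>Om. w x * log 2 (Pfh (f x, h x)))
       + (\<Sum>x\<in>Om. w x * log 2 (Pgh (g x, h x))) - (\<Sum>x\<in>Om. w x * log 2 (Ph (h x)))"
    by (simp add: sum.distrib sum_subtractf)
  then show ?thesis using G unfolding ent_alt[of "\<lambda>x. (f x, h x)"] ent_alt[of "\<lambda>x. (g x, h x)"] ent_alt[of h]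
    Pfh_def Pgh_def Ph_def by simp
qed

lemma subadd: "ent Om w (\<lambda>x. (f x, g x)) \<le> ent Om w f + ent Om w g"
proof -
  have "ent Om w (\<lambda>x. (f x, g x, ())) + ent Om w (\<lambda>x. ())
     \<le> ent Om w (\<lambda>x. (f x, ())) + ent Om w (\<lambda>x. (g x, ()))" by (rule submod)
  moreover have "ent Om w (\<lambda>x. (f x, g x, ())) = ent Om w (\<lambda>x. (f x, g x))" by (rule ent_cong) auto
  moreover have "ent Om w (\<lambda>x. (f x, ())) = ent Om w f" by (rule ent_cong) auto
  moreover have "ent Om w (\<lambda>x. (g x, ())) = ent Om w g" by (rule ent_cong) auto
  ultimately show ?thesis by (simp add: ent_const)
qed


lemma fano:
  assumes S: "finite S" "S \<noteq> {}" "U ` Om \<subseteq> S"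
    and err: "(\<Sum>x\<in>Om. if phi (W x) \<noteq> U x then w x else 0) \<le> eps"
  shows "ent Om w (\<lambda>x. (U x, W x)) \<le> ent Om w W + 1 + eps * log 2 (card S)"
proof -
  define N where "N = real (card S)"
  have N1: "N \<ge> 1" unfolding N_def using S by (simp add: Suc_leI card_gt_0_iff)
  define PW where "PW = Pr Om w W"
  define q where "q v = PW (snd v) * (if fst v = phi (snd v) then 1/2 else 1/(2*N))" for v
  let ?F = "\<lambda>x. (U x, W x)"
  have qnn: "q v \<ge> 0" for v unfolding q_def PW_def using N1 by (simp add: Pr_nonneg)
  have inner: "(\<Sum>a\<in>S. (if a = phi c then 1/2 else 1/(2*N))) \<le> 1" for c
  proof -
    have "(\<Sum>a\<in>S. (if a = phi c then 1/2 else 1/(2*N))) \<le> (\<Sum>a\<in>S. (if a = phi c then 1/2 else 0) + 1/(2*N))"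
      by (rule sum_mono) (use N1 in auto)
    also have "\<dots> = (if phi c \<in> S then 1/2 else 0) + N * (1/(2*N))"
      using S(1) by (simp add: sum.distrib N_def)
    also have "\<dots> \<le> 1" using N1 by auto
    finally show ?thesis .
  qed
  have "(\<Sum>v\<in>?F ` Om. q v) \<le> (\<Sum>v\<in>S \<times> W ` Om. q v)"
    by (rule sum_mono2) (use fin qnn S in auto)
  also have "\<dots> = (\<Sum>c\<in>W ` Om. \<Sum>a\<in>S. q (a, c))"
    by (subst sum.swap) (simp add: sum.cartesian_product)
  also have "\<dots> = (\<Sum>c\<in>W ` Om. PW c * (\<Sum>a\<in>S. (if a = phi c then 1/2 else 1/(2*N))))"
    unfolding q_def by (simp add: sum_distrib_left)
  also have "\<dots> \<le> (\<Sum>c\<in>W ` Om. PW c)"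
    by (rule sum_mono) (use inner in \<open>simp add: PW_def Pr_nonneg mult_left_le\<close>)
  also have "\<dots> = 1" unfolding PW_def by (rule sum_Pr)
  finally have qsum: "(\<Sum>v\<in>?F ` Om. q v) \<le> 1" .
  have qpos: "q (?F x) > 0" if "x \<in> Om" "w x > 0" for x
  proof -
    have "PW (W x) > 0" using Pr_pos[OF that] unfolding PW_def by auto
    then show ?thesis unfolding q_def using N1 by simp
  qed
  have G: "ent Om w ?F \<le> - (\<Sum>x\<in>Om. w x * log 2 (q (?F x)))"
    by (rule gibbs) (use qnn qpos qsum in auto)
  have "- (w x * log 2 (q (?F x))) \<le> - (w x * log 2 (PW (W x))) + w x + (if phi (W x) \<noteq> U x then w x else 0) * log 2 N"
    if x: "x \<in> Om" for x
  proof (cases "w x > 0")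
    case True
    have p: "PW (W x) > 0" using Pr_pos[OF x True] unfolding PW_def by auto
    show ?thesis
    proof (cases "U x = phi (W x)")
      case True
      then have eq: "log 2 (q (?F x)) = log 2 (PW (W x)) - 1"
        unfolding q_def using p by (simp add: log_divide_pos)
      show ?thesis unfolding eq using True by (simp add: algebra_simps)
    next
      case False
      then have eq: "log 2 (q (?F x)) = log 2 (PW (W x)) - 1 - log 2 N"
        unfolding q_def using p N1 by (simp add: log_divide_pos log_mult_pos)
      show ?thesis unfolding eq using False by (simp add: algebra_simps)
    qed
  next
    case False
    then have "w x = 0" using wnn x by force
    then show ?thesis by simp
  qed
  then have "- (\<Sum>x\<in>Om. w x * log 2 (q (?F x))) \<le> (\<Sum>x\<in>Om. - (w x * log 2 (PW (W x))) + w x + (if phi (W x) \<noteq> U x then w x else 0) * log 2 N)"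
    by (subst sum_negf[symmetric]) (rule sum_mono)
  also have "\<dots> = ent Om w W + 1 + (\<Sum>x\<in>Om. if phi (W x) \<noteq> U x then w x else 0) * log 2 N"
    unfolding ent_alt[of W] PW_def by (simp add: sum.distrib sum_negf sum_distrib_right wsum sum_subtractf)
  also have "\<dots> \<le> ent Om w W + 1 + eps * log 2 N"
    using err N1 by (intro add_left_mono mult_right_mono) auto
  finally show ?thesis using G unfolding N_def by linarith
qed

lemma fanoD:
  assumes S: "finite S" "S \<noteq> {}" "U ` Om \<subseteq> S"
    and det: "\<And>x y. x \<in> Om \<Longrightarrow> y \<in> Om \<Longrightarrow> W x = W y \<Longrightarrow> D x = D y"
    and err: "(\<Sum>x\<in>Om. if D x \<noteq> U x then w x else 0) \<le> eps"
  shows "ent Om w (\<lambda>x. (U x, W x)) \<le> ent Om w W + 1 + eps * log 2 (card S)"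
proof -
  define phi where "phi c = D (SOME x. x \<in> Om \<and> W x = c)" for c
  have "phi (W x) = D x" if x: "x \<in> Om" for x
  proof -
    have "\<exists>y. y \<in> Om \<and> W y = W x" using x by blast
    then have "(SOME y. y \<in> Om \<and> W y = W x) \<in> Om \<and> W (SOME y. y \<in> Om \<and> W y = W x) = W x"
      by (rule someI_ex)
    then show ?thesis unfolding phi_def using det x by blast
  qed
  then have "(\<Sum>x\<in>Om. if phi (W x) \<noteq> U x then w x else 0) = (\<Sum>x\<in>Om. if D x \<noteq> U x then w x else 0)"
    by (intro sum.cong) auto
  then show ?thesis using fano[OF S, of phi W eps] err by simp
qed

lemma card_bound:
  assumes "Om \<noteq> {}"
  shows "ent Om w f \<le> log 2 (card (f ` Om))"
proof -
  define N where "N = real (card (f ` Om))"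
  have N1: "N \<ge> 1" unfolding N_def using assms fin by (simp add: Suc_leI card_gt_0_iff)
  have "ent Om w f \<le> - (\<Sum>x\<in>Om. w x * log 2 ((\<lambda>v. 1 / N) (f x)))"
    by (rule gibbs) (use N1 in \<open>auto simp: N_def\<close>)
  also have "\<dots> = log 2 N" using N1 by (simp add: log_divide_pos sum_negf sum_distrib_right[symmetric] wsum)
  finally show ?thesis unfolding N_def .
qed

lemma len_bound:
  fixes f :: "'x \<Rightarrow> bool list"
  assumes th: "0 < th" "th < 1"
  shows "ent Om w f \<le> log 2 (1 / (1 - th)) + (1 - log 2 th) * (\<Sum>x\<in>Om. w x * real (length (f x)))"
proof -
  define q where "q y = (1 - th) * (th / 2) ^ length y" for y :: "bool list"
  have qpos: "q y > 0" for y unfolding q_def using th by simp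
  define K where "K = Max (length ` f ` Om)"
  define T where "T l = {y :: bool list. length y = l}" for l
  have finT: "finite (T l)" for l unfolding T_def using finite_lists_length_eq[of "UNIV :: bool set" l] by simp
  have cardT: "card (T l) = 2 ^ l" for l unfolding T_def using card_lists_length_eq[of "UNIV :: bool set" l] by simp
  have sub: "f ` Om \<subseteq> (\<Union>l\<in>{..K}. T l)"
    unfolding T_def K_def using fin by (auto intro: Max_ge)
  have "(\<Sum>v\<in>f ` Om. q v) \<le> (\<Sum>v\<in>(\<Union>l\<in>{..K}. T l). q v)"
    by (rule sum_mono2) (use sub finT qpos in \<open>auto intro: less_imp_le\<close>)
  also have "\<dots> = (\<Sum>l\<in>{..K}. \<Sum>v\<in>T l. q v)"
  proof (rule sum.UNION_disjoint)
    show "\<forall>i\<in>{..K}. finite (T i)" using finT by blast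
    show "\<forall>i\<in>{..K}. \<forall>j\<in>{..K}. i \<noteq> j \<longrightarrow> T i \<inter> T j = {}" unfolding T_def by auto
  qed simp
  also have "\<dots> = (\<Sum>l\<in>{..K}. (1 - th) * th ^ l)"
  proof (rule sum.cong)
    fix l assume "l \<in> {..K}"
    have "(\<Sum>v\<in>T l. q v) = (\<Sum>v\<in>T l. (1 - th) * (th / 2) ^ l)"
      unfolding q_def T_def by (rule sum.cong) auto
    also have "\<dots> = 2 ^ l * ((1 - th) * (th / 2) ^ l)" by (simp add: cardT)
    also have "\<dots> = (1 - th) * th ^ l" by (simp add: power_divide)
    finally show "(\<Sum>v\<in>T l. q v) = (1 - th) * th ^ l" .
  qed simp
  also have "\<dots> = (1 - th) * (\<Sum>l<Suc K. th ^ l)"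
    by (simp add: sum_distrib_left lessThan_Suc_atMost)
  also have "\<dots> = 1 - th ^ Suc K" using th by (simp only: sum_gp_strict) (simp add: field_simps)
  also have "\<dots> \<le> 1" using th by simp
  finally have qsum: "(\<Sum>v\<in>f ` Om. q v) \<le> 1" .
  have G: "ent Om w f \<le> - (\<Sum>x\<in>Om. w x * log 2 (q (f x)))"
    by (rule gibbs) (use qpos qsum in \<open>auto intro: less_imp_le\<close>)
  have lq: "log 2 (q y) = log 2 (1 - th) + real (length y) * (log 2 th - 1)" for y
    unfolding q_def using th by (simp add: log_mult_pos log_nat_power log_divide_pos)
  have pt: "- (w x * log 2 (q (f x))) = - log 2 (1 - th) * w x + (1 - log 2 th) * (w x * real (length (f x)))" for x
    unfolding lq by (simp add: algebra_simps)
  have "- (\<Sum>x\<in>Om. w x * log 2 (q (f x))) = (\<Sum>x\<in>Om. - (w x * log 2 (q (f x))))"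
    by (simp add: sum_negf)
  also have "\<dots> = - log 2 (1 - th) * (\<Sum>x\<in>Om. w x) + (1 - log 2 th) * (\<Sum>x\<in>Om. w x * real (length (f x)))"
    unfolding pt sum.distrib sum_distrib_left[symmetric] by simp
  also have "\<dots> = log 2 (1 / (1 - th)) + (1 - log 2 th) * (\<Sum>x\<in>Om. w x * real (length (f x)))"
    using th by (simp add: wsum log_divide_pos)
  finally show ?thesis using G by linarith
qed


lemma boundA:
  assumes S1: "finite S1" "S1 \<noteq> {}" "X1 ` Om \<subseteq> S1"
    and S2: "finite S2" "S2 \<noteq> {}" "X2 ` Om \<subseteq> S2"
    and d1: "\<And>x y. x \<in> Om \<Longrightarrow> y \<in> Om \<Longrightarrow> Y x = Y y \<Longrightarrow> Z1 x = Z1 y \<Longrightarrow> Da x = Da y"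
    and e1: "(\<Sum>x\<in>Om. if Da x \<noteq> X1 x then w x else 0) \<le> eps"
    and d2: "\<And>x y. x \<in> Om \<Longrightarrow> y \<in> Om \<Longrightarrow> Y x = Y y \<Longrightarrow> Z2 x = Z2 y \<Longrightarrow> Db x = Db y"
    and e2: "(\<Sum>x\<in>Om. if Db x \<noteq> X2 x then w x else 0) \<le> eps"
  shows "ent Om w (\<lambda>x. (X1 x, X2 x)) \<le> ent Om w Y + ent Om w Z1 + ent Om w Z2 + 2
           + eps * (log 2 (card S1) + log 2 (card S2))"
proof -
  define W where "W x = (Y x, Z1 x, Z2 x)" for x
  have m: "ent Om w (\<lambda>x. (X1 x, X2 x)) \<le> ent Om w (\<lambda>x. (X1 x, X2 x, W x))"
    by (rule ent_mono) auto
  have sm: "ent Om w (\<lambda>x. (X1 x, X2 x, W x)) + ent Om w W \<le> ent Om w (\<lambda>x. (X1 x, W x)) + ent Om w (\<lambda>x. (X2 x, W x))"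
    by (rule submod)
  have f1: "ent Om w (\<lambda>x. (X1 x, W x)) \<le> ent Om w W + 1 + eps * log 2 (card S1)"
    by (rule fanoD[OF S1 _ e1]) (auto simp: W_def intro: d1)
  have f2: "ent Om w (\<lambda>x. (X2 x, W x)) \<le> ent Om w W + 1 + eps * log 2 (card S2)"
    by (rule fanoD[OF S2 _ e2]) (auto simp: W_def intro: d2)
  have "ent Om w W \<le> ent Om w Y + ent Om w (\<lambda>x. (Z1 x, Z2 x))"
    unfolding W_def by (rule subadd)
  also have "\<dots> \<le> ent Om w Y + (ent Om w Z1 + ent Om w Z2)"
    by (intro add_left_mono subadd)
  finally have sa: "ent Om w W \<le> ent Om w Y + ent Om w Z1 + ent Om w Z2" by simp
  show ?thesis using m sm f1 f2 sa by (simp add: algebra_simps)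
qed

lemma boundB:
  assumes S1: "finite S1" "S1 \<noteq> {}" "X1 ` Om \<subseteq> S1"
    and S2: "finite S2" "S2 \<noteq> {}" "X2 ` Om \<subseteq> S2"
    and d1: "\<And>x y. x \<in> Om \<Longrightarrow> y \<in> Om \<Longrightarrow> Y x = Y y \<Longrightarrow> Z1 x = Z1 y \<Longrightarrow> Da x = Da y"
    and e1: "(\<Sum>x\<in>Om. if Da x \<noteq> X1 x then w x else 0) \<le> eps"
    and d2: "\<And>x y. x \<in> Om \<Longrightarrow> y \<in> Om \<Longrightarrow> Y' x = Y' y \<Longrightarrow> Z1 x = Z1 y \<Longrightarrow> Db x = Db y"
    and e2: "(\<Sum>x\<in>Om. if Db x \<noteq> X2 x then w x else 0) \<le> eps"
  shows "ent Om w (\<lambda>x. (X1 x, X2 x)) \<le> ent Om w Y + ent Om w Y' + ent Om w Z1 + 2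
           + eps * (log 2 (card S1) + log 2 (card S2))"
proof -
  define W where "W x = (Y x, Y' x, Z1 x)" for x
  have m: "ent Om w (\<lambda>x. (X1 x, X2 x)) \<le> ent Om w (\<lambda>x. (X1 x, X2 x, W x))"
    by (rule ent_mono) auto
  have sm: "ent Om w (\<lambda>x. (X1 x, X2 x, W x)) + ent Om w W \<le> ent Om w (\<lambda>x. (X1 x, W x)) + ent Om w (\<lambda>x. (X2 x, W x))"
    by (rule submod)
  have f1: "ent Om w (\<lambda>x. (X1 x, W x)) \<le> ent Om w W + 1 + eps * log 2 (card S1)"
    by (rule fanoD[OF S1 _ e1]) (auto simp: W_def intro: d1)
  have f2: "ent Om w (\<lambda>x. (X2 x, W x)) \<le> ent Om w W + 1 + eps * log 2 (card S2)"
    by (rule fanoD[OF S2 _ e2]) (auto simp: W_def intro: d2)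
  have "ent Om w W \<le> ent Om w Y + ent Om w (\<lambda>x. (Y' x, Z1 x))"
    unfolding W_def by (rule subadd)
  also have "\<dots> \<le> ent Om w Y + (ent Om w Y' + ent Om w Z1)"
    by (intro add_left_mono subadd)
  finally have sa: "ent Om w W \<le> ent Om w Y + ent Om w Y' + ent Om w Z1" by simp
  show ?thesis using m sm f1 f2 sa by (simp add: algebra_simps)
qed

lemma boundC:
  assumes SU: "finite SU" "SU \<noteq> {}" "U ` Om \<subseteq> SU"
    and SV: "finite SV" "SV \<noteq> {}" "V ` Om \<subseteq> SV"
    and d1: "\<And>x y. x \<in> Om \<Longrightarrow> y \<in> Om \<Longrightarrow> Y x = Y y \<Longrightarrow> Z1 x = Z1 y \<Longrightarrow> Da x = Da y"
    and e1: "(\<Sum>x\<in>Om. if Da x \<noteq> U x then w x else 0) \<le> eps"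
    and d2: "\<And>x y. x \<in> Om \<Longrightarrow> y \<in> Om \<Longrightarrow> Y' x = Y' y \<Longrightarrow> Z2 x = Z2 y \<Longrightarrow> Db x = Db y"
    and e2: "(\<Sum>x\<in>Om. if Db x \<noteq> U x then w x else 0) \<le> eps"
    and d3: "\<And>x y. x \<in> Om \<Longrightarrow> y \<in> Om \<Longrightarrow> Y x = Y y \<Longrightarrow> Z2 x = Z2 y \<Longrightarrow> Dc x = Dc y"
    and e3: "(\<Sum>x\<in>Om. if Dc x \<noteq> V x then w x else 0) \<le> eps"
  shows "ent Om w (\<lambda>x. (U x, V x)) + ent Om w U \<le> ent Om w Y + ent Om w Z1 + ent Om w Y' + ent Om w Z2 + 3
           + eps * (2 * log 2 (card SU) + log 2 (card SV))"
proof -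
  define A where "A x = (Y x, Z1 x)" for x
  define B where "B x = (Y' x, Z2 x)" for x
  have f1: "ent Om w (\<lambda>x. (U x, A x)) \<le> ent Om w A + 1 + eps * log 2 (card SU)"
    by (rule fanoD[OF SU _ e1]) (auto simp: A_def intro: d1)
  have f2: "ent Om w (\<lambda>x. (U x, B x)) \<le> ent Om w B + 1 + eps * log 2 (card SU)"
    by (rule fanoD[OF SU _ e2]) (auto simp: B_def intro: d2)
  have sm: "ent Om w (\<lambda>x. (A x, B x, U x)) + ent Om w U \<le> ent Om w (\<lambda>x. (A x, U x)) + ent Om w (\<lambda>x. (B x, U x))"
    by (rule submod)
  have c1: "ent Om w (\<lambda>x. (A x, U x)) = ent Om w (\<lambda>x. (U x, A x))" by (rule ent_cong) auto
  have c2: "ent Om w (\<lambda>x. (B x, U x)) = ent Om w (\<lambda>x. (U x, B x))" by (rule ent_cong) auto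
  have m: "ent Om w (\<lambda>x. (U x, V x)) \<le> ent Om w (\<lambda>x. (V x, (A x, B x, U x)))"
    by (rule ent_mono) auto
  have f3: "ent Om w (\<lambda>x. (V x, (A x, B x, U x))) \<le> ent Om w (\<lambda>x. (A x, B x, U x)) + 1 + eps * log 2 (card SV)"
    by (rule fanoD[OF SV _ e3]) (auto simp: A_def B_def intro: d3)
  have sA: "ent Om w A \<le> ent Om w Y + ent Om w Z1" unfolding A_def by (rule subadd)
  have sB: "ent Om w B \<le> ent Om w Y' + ent Om w Z2" unfolding B_def by (rule subadd)
  show ?thesis using f1 f2 sm c1 c2 m f3 sA sB by (simp add: algebra_simps)
qed


end

definition sq :: "nat \<Rightarrow> 'c list set" where "sq n = {xs. length xs = n}"

definition prodw :: "'c pmf \<Rightarrow> 'c list \<Rightarrow> real" where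
  "prodw q xs = prod_list (map (pmf q) xs)"

lemma finite_sq: "finite (sq n :: ('c::finite) list set)"
  unfolding sq_def using finite_lists_length_eq[of "UNIV :: 'c set" n] by simp

lemma sq_Suc: "sq (Suc n) = (\<lambda>(x, xs). x # xs) ` (UNIV \<times> sq n)"
  unfolding sq_def by (auto simp: length_Suc_conv image_iff)

lemma sum_sq_Suc:
  "(\<Sum>ys\<in>sq (Suc n). F ys) = (\<Sum>x\<in>(UNIV :: ('c::finite) set). \<Sum>xs\<in>sq n. F (x # xs))"
proof -
  have inj: "inj_on (\<lambda>(x, xs). x # xs) (UNIV \<times> sq n)" by (auto simp: inj_on_def)
  show ?thesis unfolding sq_Suc sum.reindex[OF inj]
    by (simp add: sum.cartesian_product split_def)
qed

lemma sq_0: "sq 0 = {[]}" unfolding sq_def by auto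

lemma prodw_sum: "(\<Sum>xs\<in>sq n. prodw (q :: ('c::finite) pmf) xs) = 1"
proof (induction n)
  case 0 then show ?case by (simp add: sq_0 prodw_def)
next
  case (Suc n)
  have "(\<Sum>xs\<in>sq (Suc n). prodw q xs) = (\<Sum>x\<in>UNIV. pmf q x * (\<Sum>xs\<in>sq n. prodw q xs))"
    unfolding sum_sq_Suc by (simp add: prodw_def sum_distrib_left)
  also have "\<dots> = 1" using Suc by (simp add: sum_pmf_eq_1)
  finally show ?case .
qed

lemma prodw_nonneg: "prodw q xs \<ge> 0"
  unfolding prodw_def by (induction xs) auto

lemma finprob_sq: "finprob (sq n) (prodw (q :: ('c::finite) pmf))"
  by unfold_locales (auto simp: finite_sq prodw_nonneg prodw_sum)

lemma pmf_map_sum: "pmf (map_pmf g (q :: ('c::finite) pmf)) b = (\<Sum>x\<in>UNIV. if g x = b then pmf q x else 0)"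
  by (simp add: pmf_map measure_measure_pmf_finite sum.If_cases vimage_def)

lemma Pr_map:
  "length a = n \<Longrightarrow> Pr (sq n) (prodw (q :: ('c::finite) pmf)) (map g) a = prodw (map_pmf g q) a"
proof (induction n arbitrary: a)
  case 0 then show ?case by (simp add: sq_0 Pr_def prodw_def)
next
  case (Suc n)
  then obtain b bs where a: "a = b # bs" "length bs = n" by (auto simp: length_Suc_conv)
  have "Pr (sq (Suc n)) (prodw q) (map g) a
      = (\<Sum>x\<in>UNIV. \<Sum>xs\<in>sq n. (if g x = b then pmf q x else 0) * (if map g xs = bs then prodw q xs else 0))"
    unfolding Pr_def sum_sq_Suc a by (intro sum.cong refl) (simp add: prodw_def)
  also have "\<dots> = (\<Sum>x\<in>UNIV. if g x = b then pmf q x else 0) * Pr (sq n) (prodw q) (map g) bs"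
    by (simp only: Pr_def sum_product)
  also have "\<dots> = prodw (map_pmf g q) a"
    by (simp only: Suc.IH[OF a(2)] a(1) pmf_map_sum[symmetric]) (simp add: prodw_def)
  finally show ?case .
qed

lemma xlogx_mult:
  fixes a b :: real
  assumes "a \<ge> 0" "b \<ge> 0"
  shows "a * b * log 2 (a * b) = b * (a * log 2 a) + a * (b * log 2 b)"
proof (cases "a = 0 \<or> b = 0")
  case True then show ?thesis by auto
next
  case False
  then have "a > 0" "b > 0" using assms by auto
  then show ?thesis by (simp add: log_mult_pos algebra_simps)
qed

lemma ent_prod:
  "- (\<Sum>xs\<in>sq n. prodw q xs * log 2 (prodw q xs)) = real n * entropy_pmf (q :: ('c::finite) pmf)"
proof (induction n)
  case 0 then show ?case by (simp add: sq_0 prodw_def)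
next
  case (Suc n)
  have "(\<Sum>xs\<in>sq (Suc n). prodw q xs * log 2 (prodw q xs))
     = (\<Sum>x\<in>UNIV. \<Sum>xs\<in>sq n. prodw q xs * (pmf q x * log 2 (pmf q x)) + pmf q x * (prodw q xs * log 2 (prodw q xs)))"
    unfolding sum_sq_Suc
  proof (intro sum.cong refl)
    fix x xs
    have "prodw q (x # xs) = pmf q x * prodw q xs" by (simp add: prodw_def)
    then show "prodw q (x # xs) * log 2 (prodw q (x # xs)) = prodw q xs * (pmf q x * log 2 (pmf q x)) + pmf q x * (prodw q xs * log 2 (prodw q xs))"
      using xlogx_mult[OF pmf_nonneg prodw_nonneg, of q x q xs] by simp
  qed
  also have "\<dots> = (\<Sum>x\<in>UNIV. pmf q x * log 2 (pmf q x)) * (\<Sum>xs\<in>sq n. prodw q xs)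
       + (\<Sum>x\<in>UNIV. pmf q x) * (\<Sum>xs\<in>sq n. prodw q xs * log 2 (prodw q xs))"
    unfolding sum_product sum.distrib[symmetric] by (intro sum.cong refl) (simp add: mult.commute)
  also have "\<dots> = (\<Sum>x\<in>UNIV. pmf q x * log 2 (pmf q x)) + (\<Sum>xs\<in>sq n. prodw q xs * log 2 (prodw q xs))"
    by (simp add: prodw_sum sum_pmf_eq_1)
  finally show ?case using Suc by (simp add: entropy_pmf_def algebra_simps)
qed

lemma ent_map:
  "ent (sq n) (prodw (q :: ('c::finite) pmf)) (map g) = real n * entropy_pmf (map_pmf (g :: 'c \<Rightarrow> 'd::finite) q)"
proof -
  let ?P = "Pr (sq n) (prodw q) (map g)"
  have sub: "map g ` sq n \<subseteq> sq n" unfolding sq_def by auto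
  have eqP: "?P v = prodw (map_pmf g q) v" if "v \<in> sq n" for v
    using that by (intro Pr_map) (simp add: sq_def)
  have "(\<Sum>v\<in>map g ` sq n. ?P v * log 2 (?P v)) = (\<Sum>v\<in>sq n. ?P v * log 2 (?P v))"
  proof (rule sum.mono_neutral_left[OF finite_sq sub])
    show "\<forall>v\<in>sq n - map g ` sq n. ?P v * log 2 (?P v) = 0"
    proof
      fix v assume "v \<in> sq n - map g ` sq n"
      then have "?P v = 0" unfolding Pr_def by (intro sum.neutral) (auto split: if_splits)
      then show "?P v * log 2 (?P v) = 0" by simp
    qed
  qed
  also have "\<dots> = (\<Sum>v\<in>sq n. prodw (map_pmf g q) v * log 2 (prodw (map_pmf g q) v))"
    by (intro sum.cong refl) (simp add: eqP)
  finally show ?thesis unfolding ent_def using ent_prod[where n=n and q="map_pmf g q"] by simp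
qed



lemma seqs_sq: "seqs n = sq n" by (simp add: seqs_def sq_def)
lemma wt_prodw: "wt p = prodw p" by (simp add: wt_def prodw_def fun_eq_iff)

lemma card_sq: "card (sq n :: ('c::finite) list set) = CARD('c) ^ n"
  unfolding sq_def using card_lists_length_eq[of "UNIV :: 'c set" n] by simp

lemma sq_ne: "sq n \<noteq> {}" unfolding sq_def by (auto intro!: exI[of _ "replicate n undefined"])

lemma log_card_sq: "log 2 (real (card (sq n :: ('c::finite) list set))) = real n * log 2 (real CARD('c))"
  unfolding card_sq by (simp add: log_nat_power)

lemma log_card_nonneg: "log 2 (real CARD('c::finite)) \<ge> 0"
  by simp

lemma prob_le_Pe:
  assumes "d \<in> demands" "i \<in> {1,2}"
  shows "prob_lib p n (err_event S d i) \<le> Pe p n S"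
  unfolding Pe_def using assms by (intro Max_ge) (auto simp: demands_def)

lemma prob_nonneg: "prob_lib p n E \<ge> 0"
  unfolding prob_lib_def wt_prodw by (rule sum_nonneg) (auto simp: prodw_nonneg)

lemma len_le_rate:
  assumes "d \<in> demands"
  shows "expect_lib p n (\<lambda>x1 x2. real (length (codeword S d x1 x2))) / real n \<le> rate p n S"
  unfolding rate_def using assms by (intro Max_ge) (auto simp: demands_def)

lemma expect_nonneg: "expect_lib p n (\<lambda>x1 x2. real (length (codeword S d x1 x2))) \<ge> 0"
  unfolding expect_lib_def wt_prodw by (rule sum_nonneg) (auto simp: prodw_nonneg)

lemma rate_nonneg: "rate p n S \<ge> 0"
  using len_le_rate[of "(1,1)" p n S] expect_nonneg[of p n S "(1,1)"]
  by (simp add: demands_def) (meson divide_nonneg_nonneg of_nat_0_le_iff order_trans)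

lemma code_bound:
  fixes p :: "('a::finite \<times> 'b::finite) pmf"
  assumes n: "n \<ge> 1" and d: "d \<in> demands"
  shows "ent (sq n) (prodw p) (\<lambda>xs. codeword S d (map fst xs) (map snd xs))
          \<le> real n * rate p n S + rate p n S / ln 2 + log 2 (real n + 1)"
proof -
  interpret F: finprob "sq n" "prodw p" by (rule finprob_sq)
  define th where "th = real n / (real n + 1)"
  have th: "0 < th" "th < 1" unfolding th_def using n by auto
  define L where "L = expect_lib p n (\<lambda>x1 x2. real (length (codeword S d x1 x2)))"
  have L0: "L \<ge> 0" unfolding L_def by (rule expect_nonneg)
  have Lr: "L \<le> real n * rate p n S"
    using len_le_rate[OF d, of p n S] n unfolding L_def[symmetric] by (simp add: field_simps)
  have "ent (sq n) (prodw p) (\<lambda>xs. codeword S d (map fst xs) (map snd xs))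
      \<le> log 2 (1 / (1 - th)) + (1 - log 2 th) * L"
    using F.len_bound[OF th, of "\<lambda>xs. codeword S d (map fst xs) (map snd xs)"]
    unfolding L_def expect_lib_def seqs_sq wt_prodw by simp
  also have "log 2 (1 / (1 - th)) = log 2 (real n + 1)"
    unfolding th_def using n by (simp add: field_simps)
  also have "1 - log 2 th \<le> 1 + 1 / (real n * ln 2)"
  proof -
    have "- log 2 th = ln ((real n + 1) / real n) / ln 2"
      unfolding th_def log_def using n by (simp add: ln_div field_simps)
    also have "\<dots> \<le> ((real n + 1) / real n - 1) / ln 2"
      using n by (intro divide_right_mono ln_le_minus_one) auto
    also have "\<dots> = 1 / (real n * ln 2)" using n by (simp add: field_simps)
    finally show ?thesis by simp
  qed
  then have "(1 - log 2 th) * L \<le> (1 + 1 / (real n * ln 2)) * L"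
    using L0 by (rule mult_right_mono)
  also have "\<dots> = L + (L / real n) / ln 2" by (simp add: field_simps)
  also have "\<dots> \<le> real n * rate p n S + rate p n S / ln 2"
  proof -
    have "L / real n \<le> rate p n S" using Lr n by (simp add: field_simps)
    then show ?thesis using Lr by (intro add_mono divide_right_mono) auto
  qed
  finally show ?thesis by simp
qed

lemma cache_bound:
  fixes p :: "('a::finite \<times> 'b::finite) pmf"
  assumes v: "valid_cacm n M S" and i: "i \<in> {1,2}"
  shows "ent (sq n) (prodw p) (\<lambda>xs. cache S i (map fst xs) (map snd xs)) \<le> real n * M"
proof -
  interpret F: finprob "sq n" "prodw p" by (rule finprob_sq)
  let ?Z = "\<lambda>xs. cache S i (map fst xs) (map snd xs)"
  define r where "r = 2 powr (real n * M)"
  have r0: "r > 0" unfolding r_def by simp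
  have vals: "1 \<le> ?Z xs \<and> real (?Z xs) \<le> r" if "xs \<in> sq n" for xs
    using v i that unfolding valid_cacm_def seqs_sq r_def by blast
  have sub: "?Z ` sq n \<subseteq> {1..nat \<lfloor>r\<rfloor>}"
  proof
    fix v assume "v \<in> ?Z ` sq n"
    then obtain xs where xs: "xs \<in> sq n" "v = ?Z xs" by blast
    then show "v \<in> {1..nat \<lfloor>r\<rfloor>}" using vals[OF xs(1)] le_nat_floor[of v r] by auto
  qed
  have ne: "?Z ` sq n \<noteq> {}" using sq_ne by blast
  have c1: "card (?Z ` sq n) \<ge> 1"
    using ne F.fin by (simp add: Suc_leI card_gt_0_iff)
  have "real (card (?Z ` sq n)) \<le> real (card {1..nat \<lfloor>r\<rfloor>})"
    by (intro of_nat_mono card_mono) (use sub in auto)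
  also have "\<dots> \<le> r" using of_nat_floor[of r] r0 by simp
  finally have cr: "real (card (?Z ` sq n)) \<le> r" .
  have "ent (sq n) (prodw p) ?Z \<le> log 2 (card (?Z ` sq n))"
    by (rule F.card_bound[OF sq_ne])
  also have "\<dots> \<le> log 2 r" using c1 cr by simp
  also have "\<dots> = real n * M" unfolding r_def by simp
  finally show ?thesis .
qed



lemma pair_maps_eq: "((map fst x, map snd x) = (map fst y, map snd y)) = (map id x = map id y)"
proof
  assume "(map fst x, map snd x) = (map fst y, map snd y)"
  then have "zip (map fst x) (map snd x) = zip (map fst y) (map snd y)" by simp
  then show "map id x = map id y" by (simp only: zip_map_fst_snd list.map_id)
qed simp

lemma scheme_bounds:
  fixes p :: "('a::finite \<times> 'b::finite) pmf" and S :: "('a, 'b) cacm"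
  assumes n: "n \<ge> 1" and v: "valid_cacm n M S"
  defines "e \<equiv> (2 * (rate p n S / ln 2) + 2 * log 2 (real n + 1) + 3) / real n
               + 3 * (Pe p n S * (log 2 (real CARD('a)) + log 2 (real CARD('b))))"
  shows "entropy_pmf p \<le> rate p n S + 2 * M + e"
    and "entropy_pmf p \<le> 2 * rate p n S + M + e"
    and "entropy_pmf p + entropy_pmf (map_pmf fst p) \<le> 2 * rate p n S + 2 * M + e"
    and "entropy_pmf p + entropy_pmf (map_pmf snd p) \<le> 2 * rate p n S + 2 * M + e"
proof -
  interpret F: finprob "sq n" "prodw p" by (rule finprob_sq)
  define r where "r = rate p n S"
  define eps where "eps = Pe p n S"
  define c where "c = log 2 (real CARD('a)) + log 2 (real CARD('b))"
  define lg where "lg = log 2 (real n + 1)"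
  define H where "H = entropy_pmf p"
  define H1 where "H1 = entropy_pmf (map_pmf fst p)"
  define H2 where "H2 = entropy_pmf (map_pmf snd p)"
  have e_eq: "e = (2 * (r / ln 2) + 2 * lg + 3) / real n + 3 * (eps * c)"
    unfolding e_def r_def lg_def eps_def c_def by simp
  have n0: "real n > 0" using n by simp
  have ne: "real n * e = 2 * (r / ln 2) + 2 * lg + 3 + 3 * (eps * (real n * c))"
    unfolding e_eq using n0 by (simp add: field_simps)
  have r0: "r \<ge> 0" unfolding r_def by (rule rate_nonneg)
  have rl: "r / ln 2 \<ge> 0" using r0 by simp
  have lg0: "lg \<ge> 0" unfolding lg_def by simp
  have eps0: "eps \<ge> 0" unfolding eps_def
    using prob_nonneg[of p n "err_event S (1,1) 1"] prob_le_Pe[of "(1,1)" 1 p n S]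
    by (simp add: demands_def)
  have c0: "c \<ge> 0" unfolding c_def by simp
  have enc0: "eps * (real n * c) \<ge> 0" using eps0 c0 n0 by simp
  let ?X1 = "\<lambda>xs::('a \<times> 'b) list. map fst xs"
  let ?X2 = "\<lambda>xs::('a \<times> 'b) list. map snd xs"
  define Z where "Z i xs = cache S i (map fst xs) (map snd xs)" for i xs
  define Y where "Y d xs = codeword S d (map fst xs) (map snd xs)" for d xs
  define Df where "Df i d xs = fst (dec S i d (Y d xs) (Z i xs))" for i d xs
  define Ds where "Ds i d xs = snd (dec S i d (Y d xs) (Z i xs))" for i d xs
  have errf: "(\<Sum>xs\<in>sq n. if Df i d xs \<noteq> ?X1 xs then prodw p xs else 0) \<le> eps"
    if "d \<in> demands" "i \<in> {1,2}" "req d i = 1" for i d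
  proof -
    have "(\<Sum>xs\<in>sq n. if Df i d xs \<noteq> ?X1 xs then prodw p xs else 0) = prob_lib p n (err_event S d i)"
      unfolding prob_lib_def seqs_sq wt_prodw err_event_def Df_def Y_def Z_def codeword_def Let_def
      using that(3) by simp
    then show ?thesis using prob_le_Pe[OF that(1,2)] unfolding eps_def by simp
  qed
  have errs: "(\<Sum>xs\<in>sq n. if Ds i d xs \<noteq> ?X2 xs then prodw p xs else 0) \<le> eps"
    if "d \<in> demands" "i \<in> {1,2}" "req d i = 2" for i d
  proof -
    have "(\<Sum>xs\<in>sq n. if Ds i d xs \<noteq> ?X2 xs then prodw p xs else 0) = prob_lib p n (err_event S d i)"
      unfolding prob_lib_def seqs_sq wt_prodw err_event_def Ds_def Y_def Z_def codeword_def Let_def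
      using that(3) by simp
    then show ?thesis using prob_le_Pe[OF that(1,2)] unfolding eps_def by simp
  qed
  have detf: "Df i d x = Df i d y" if "Y d x = Y d y" "Z i x = Z i y" for i d x y
    unfolding Df_def using that by simp
  have dets: "Ds i d x = Ds i d y" if "Y d x = Y d y" "Z i x = Z i y" for i d x y
    unfolding Ds_def using that by simp
  have S1: "finite (sq n :: 'a list set)" "(sq n :: 'a list set) \<noteq> {}" "?X1 ` sq n \<subseteq> sq n"
    by (auto simp: finite_sq sq_ne) (auto simp: sq_def)
  have S2: "finite (sq n :: 'b list set)" "(sq n :: 'b list set) \<noteq> {}" "?X2 ` sq n \<subseteq> sq n"
    by (auto simp: finite_sq sq_ne) (auto simp: sq_def)
  have l1: "log 2 (real (card (sq n :: 'a list set))) = real n * log 2 (real CARD('a))"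
    by (rule log_card_sq)
  have l2: "log 2 (real (card (sq n :: 'b list set))) = real n * log 2 (real CARD('b))"
    by (rule log_card_sq)
  have hX: "ent (sq n) (prodw p) (\<lambda>xs. (?X1 xs, ?X2 xs)) = real n * H"
  proof -
    have "ent (sq n) (prodw p) (\<lambda>xs. (?X1 xs, ?X2 xs)) = ent (sq n) (prodw p) (map id)"
      by (rule F.ent_cong) (simp only: pair_maps_eq)
    then show ?thesis unfolding H_def using ent_map[of n p id] by (simp add: pmf.map_id)
  qed
  have hX21: "ent (sq n) (prodw p) (\<lambda>xs. (?X2 xs, ?X1 xs)) = real n * H"
  proof -
    have "ent (sq n) (prodw p) (\<lambda>xs. (?X2 xs, ?X1 xs)) = ent (sq n) (prodw p) (\<lambda>xs. (?X1 xs, ?X2 xs))"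
      by (rule F.ent_cong) auto
    then show ?thesis using hX by simp
  qed
  have hX1: "ent (sq n) (prodw p) ?X1 = real n * H1" unfolding H1_def using ent_map[of n p fst] by simp
  have hX2: "ent (sq n) (prodw p) ?X2 = real n * H2" unfolding H2_def using ent_map[of n p snd] by simp
  have hY: "ent (sq n) (prodw p) (Y d) \<le> real n * r + r / ln 2 + lg" if "d \<in> demands" for d
    unfolding Y_def r_def lg_def using code_bound[OF n that, where S=S and p=p] by simp
  have hZ: "ent (sq n) (prodw p) (Z i) \<le> real n * M" if "i \<in> {1,2}" for i
    unfolding Z_def using cache_bound[OF v that, where p=p] by simp
  have hZ1: "ent (sq n) (prodw p) (Z 1) \<le> real n * M" by (rule hZ) simp
  have hZ2: "ent (sq n) (prodw p) (Z 2) \<le> real n * M" by (rule hZ) simp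
  have d12: "(1::nat, 2::nat) \<in> demands" and d21: "(2::nat, 1::nat) \<in> demands"
    by (auto simp: demands_def)
  have epsc: "eps * (real n * log 2 (real CARD('a)) + real n * log 2 (real CARD('b))) = eps * (real n * c)"
    unfolding c_def by (simp add: algebra_simps)
  have A: "ent (sq n) (prodw p) (\<lambda>xs. (?X1 xs, ?X2 xs)) \<le> ent (sq n) (prodw p) (Y (1,2)) + ent (sq n) (prodw p) (Z 1) + ent (sq n) (prodw p) (Z 2) + 2
        + eps * (log 2 (real (card (sq n :: 'a list set))) + log 2 (real (card (sq n :: 'b list set))))"
    by (rule F.boundA[OF S1 S2, where Da = "Df 1 (1,2)" and Db = "Ds 2 (1,2)"])
       (auto intro: detf dets errf errs simp: req_def demands_def)
  have "real n * H \<le> real n * r + 2 * (real n * M) + real n * e"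
    using A hX hY[OF d12] hZ1 hZ2 ne rl lg0 enc0 unfolding l1 l2 epsc
    by linarith
  moreover have "real n * (r + 2 * M + e) = real n * r + 2 * (real n * M) + real n * e"
    by (simp add: algebra_simps)
  ultimately have "real n * H \<le> real n * (r + 2 * M + e)" by linarith
  then show "entropy_pmf p \<le> rate p n S + 2 * M + e"
    using n0 unfolding H_def r_def by (simp add: mult_le_cancel_left_pos)
  have B: "ent (sq n) (prodw p) (\<lambda>xs. (?X1 xs, ?X2 xs)) \<le> ent (sq n) (prodw p) (Y (1,2)) + ent (sq n) (prodw p) (Y (2,1)) + ent (sq n) (prodw p) (Z 1) + 2
        + eps * (log 2 (real (card (sq n :: 'a list set))) + log 2 (real (card (sq n :: 'b list set))))"
    by (rule F.boundB[OF S1 S2, where Da = "Df 1 (1,2)" and Db = "Ds 1 (2,1)"])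
       (auto intro: detf dets errf errs simp: req_def demands_def)
  have "real n * H \<le> 2 * (real n * r) + real n * M + real n * e"
    using B hX hY[OF d12] hY[OF d21] hZ1 ne rl lg0 enc0 unfolding l1 l2 epsc
    by linarith
  moreover have "real n * (2 * r + M + e) = 2 * (real n * r) + real n * M + real n * e"
    by (simp add: algebra_simps)
  ultimately have "real n * H \<le> real n * (2 * r + M + e)" by linarith
  then show "entropy_pmf p \<le> 2 * rate p n S + M + e"
    using n0 unfolding H_def r_def by (simp add: mult_le_cancel_left_pos)
  have C1: "ent (sq n) (prodw p) (\<lambda>xs. (?X1 xs, ?X2 xs)) + ent (sq n) (prodw p) ?X1 \<le> ent (sq n) (prodw p) (Y (1,2)) + ent (sq n) (prodw p) (Z 1) + ent (sq n) (prodw p) (Y (2,1)) + ent (sq n) (prodw p) (Z 2) + 3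
        + eps * (2 * log 2 (real (card (sq n :: 'a list set))) + log 2 (real (card (sq n :: 'b list set))))"
    by (rule F.boundC[OF S1 S2, where Da = "Df 1 (1,2)" and Db = "Df 2 (2,1)" and Dc = "Ds 2 (1,2)"])
       (auto intro: detf dets errf errs simp: req_def demands_def)
  have "eps * (2 * (real n * log 2 (real CARD('a))) + real n * log 2 (real CARD('b))) \<le> 2 * (eps * (real n * c))"
    unfolding c_def using eps0 n0 by (simp add: algebra_simps mult_left_mono)
  then have "real n * H + real n * H1 \<le> 2 * (real n * r) + 2 * (real n * M) + real n * e"
    using C1 hX hX1 hY[OF d12] hY[OF d21] hZ1 hZ2 ne rl lg0 enc0 unfolding l1 l2
    by linarith
  moreover have "real n * (2 * r + 2 * M + e) = 2 * (real n * r) + 2 * (real n * M) + real n * e"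
    by (simp add: algebra_simps)
  ultimately have "real n * (H + H1) \<le> real n * (2 * r + 2 * M + e)" by (simp add: algebra_simps)
  then show "entropy_pmf p + entropy_pmf (map_pmf fst p) \<le> 2 * rate p n S + 2 * M + e"
    using n0 unfolding H_def H1_def r_def by (simp add: mult_le_cancel_left_pos)
  have C2: "ent (sq n) (prodw p) (\<lambda>xs. (?X2 xs, ?X1 xs)) + ent (sq n) (prodw p) ?X2 \<le> ent (sq n) (prodw p) (Y (2,1)) + ent (sq n) (prodw p) (Z 1) + ent (sq n) (prodw p) (Y (1,2)) + ent (sq n) (prodw p) (Z 2) + 3
        + eps * (2 * log 2 (real (card (sq n :: 'b list set))) + log 2 (real (card (sq n :: 'a list set))))"
    by (rule F.boundC[OF S2 S1, where Da = "Ds 1 (2,1)" and Db = "Ds 2 (1,2)" and Dc = "Df 2 (2,1)"])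
       (auto intro: detf dets errf errs simp: req_def demands_def)
  have "eps * (2 * (real n * log 2 (real CARD('b))) + real n * log 2 (real CARD('a))) \<le> 2 * (eps * (real n * c))"
    unfolding c_def using eps0 n0 by (simp add: algebra_simps mult_left_mono)
  then have "real n * H + real n * H2 \<le> 2 * (real n * r) + 2 * (real n * M) + real n * e"
    using C2 hX21 hX2 hY[OF d12] hY[OF d21] hZ1 hZ2 ne rl lg0 enc0 unfolding l1 l2
    by linarith
  moreover have "real n * (2 * r + 2 * M + e) = 2 * (real n * r) + 2 * (real n * M) + real n * e"
    by (simp add: algebra_simps)
  ultimately have "real n * (H + H2) \<le> real n * (2 * r + 2 * M + e)" by (simp add: algebra_simps)
  then show "entropy_pmf p + entropy_pmf (map_pmf snd p) \<le> 2 * rate p n S + 2 * M + e"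
    using n0 unfolding H_def H2_def r_def by (simp add: mult_le_cancel_left_pos)
qed



lemma limit_le:
  fixes r u :: "nat \<Rightarrow> real"
  assumes ev: "eventually (\<lambda>k. a \<le> r k + u k) sequentially"
    and u: "u \<longlonglongrightarrow> 0"
    and ls: "limsup (\<lambda>k. ereal (r k)) \<le> ereal R"
  shows "a \<le> R"
proof (rule ccontr)
  assume na: "\<not> a \<le> R"
  then have eta: "(a - R) / 4 > 0" by simp
  define eta where "eta = (a - R) / 4"
  have "limsup (\<lambda>k. ereal (r k)) < ereal (R + eta)" using ls eta eta_def by (simp add: le_less_trans)
  then have e1: "eventually (\<lambda>k. ereal (r k) < ereal (R + eta)) sequentially"
    by (rule Limsup_lessD)
  have e2: "eventually (\<lambda>k. u k < eta) sequentially"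
    using order_tendstoD(2)[OF u] eta eta_def by simp
  have "eventually (\<lambda>k. a \<le> r k + u k \<and> ereal (r k) < ereal (R + eta) \<and> u k < eta) sequentially"
    using eventually_conj[OF ev eventually_conj[OF e1 e2]] by simp
  then obtain k where "a \<le> r k + u k" "r k < R + eta" "u k < eta"
    by (auto simp: eventually_sequentially)
  moreover have "4 * eta = a - R" unfolding eta_def by simp
  ultimately show False using na by linarith
qed

lemma achievable_bounds:
  fixes p :: "('a::finite \<times> 'b::finite) pmf"
  assumes "achievable p R M"
  shows "entropy_pmf p - 2 * M \<le> R"
    and "(entropy_pmf p - M) / 2 \<le> R"
    and "(entropy_pmf p + entropy_pmf (map_pmf fst p)) / 2 - M \<le> R"
    and "(entropy_pmf p + entropy_pmf (map_pmf snd p)) / 2 - M \<le> R"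
proof -
  obtain nn :: "nat \<Rightarrow> nat" and S :: "nat \<Rightarrow> ('a, 'b) cacm" where
    sm: "strict_mono nn" and v: "\<And>k. valid_cacm (nn k) M (S k)"
    and pe: "(\<lambda>k. Pe p (nn k) (S k)) \<longlonglongrightarrow> 0"
    and ls: "limsup (\<lambda>k. ereal (rate p (nn k) (S k))) \<le> ereal R"
    using assms unfolding achievable_def by blast
  define r where "r k = rate p (nn k) (S k)" for k
  define c where "c = log 2 (real CARD('a)) + log 2 (real CARD('b))"
  define e where "e k = (2 * (r k / ln 2) + 2 * log 2 (real (nn k) + 1) + 3) / real (nn k)
               + 3 * (Pe p (nn k) (S k) * c)" for k
  have nk: "nn k \<ge> k" for k using sm by (rule seq_suble)
  have evn: "eventually (\<lambda>k. nn k \<ge> 1) sequentially"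
    unfolding eventually_sequentially using nk by (meson le_trans)
  have nlim: "filterlim (\<lambda>k. real (nn k)) at_top sequentially"
    using filterlim_subseq[OF sm] filterlim_real_sequentially by (rule filterlim_compose[rotated])
  have lim1: "((\<lambda>k. (2 * log 2 (real (nn k) + 1) + 3) / real (nn k)) \<longlongrightarrow> 0) sequentially"
  proof -
    have "((\<lambda>x::real. (2 * log 2 (x + 1) + 3) / x) \<longlongrightarrow> 0) at_top" by real_asymp
    then show ?thesis using nlim by (rule filterlim_compose)
  qed
  have lim2: "((\<lambda>k. 1 / real (nn k)) \<longlongrightarrow> 0) sequentially"
  proof -
    have "((\<lambda>x::real. 1 / x) \<longlongrightarrow> 0) at_top" by real_asymp
    then show ?thesis using nlim by (rule filterlim_compose)
  qed
  have "limsup (\<lambda>k. ereal (r k)) < ereal (R + 1)" using ls unfolding r_def by (simp add: le_less_trans)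
  then have evr: "eventually (\<lambda>k. r k < R + 1) sequentially"
    using Limsup_lessD by fastforce
  have lim3: "((\<lambda>k. r k / real (nn k)) \<longlongrightarrow> 0) sequentially"
  proof (rule tendsto_sandwich)
    show "eventually (\<lambda>k. 0 \<le> r k / real (nn k)) sequentially"
      unfolding r_def by (intro always_eventually allI divide_nonneg_nonneg rate_nonneg) simp
    show "eventually (\<lambda>k. r k / real (nn k) \<le> (R + 1) * (1 / real (nn k))) sequentially"
      using evr by eventually_elim (auto simp: divide_right_mono)
    show "((\<lambda>k. (R + 1) * (1 / real (nn k))) \<longlongrightarrow> 0) sequentially"
      using tendsto_mult_right_zero[OF lim2] by simp
  qed simp
  have e_eq: "e k = (2 / ln 2) * (r k / real (nn k)) + (2 * log 2 (real (nn k) + 1) + 3) / real (nn k)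
              + 3 * c * Pe p (nn k) (S k)" for k
  proof -
    have "(2 * (r k / ln 2) + 2 * log 2 (real (nn k) + 1) + 3) / real (nn k)
        = 2 * (r k / ln 2) / real (nn k) + (2 * log 2 (real (nn k) + 1) + 3) / real (nn k)"
      by (simp add: add_divide_distrib)
    moreover have "2 * (r k / ln 2) / real (nn k) = (2 / ln 2) * (r k / real (nn k))"
      by (simp add: divide_inverse mult_ac)
    ultimately show ?thesis unfolding e_def by (simp add: mult_ac)
  qed
  have elim: "e \<longlonglongrightarrow> 0"
    unfolding e_eq[abs_def]
    using tendsto_add[OF tendsto_add[OF tendsto_mult_right_zero[OF lim3, of "2 / ln 2"] lim1]
                         tendsto_mult_right_zero[OF pe, of "3 * c"]]
    by (simp add: mult.commute)
  have elim2: "(\<lambda>k. e k / 2) \<longlonglongrightarrow> 0"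
    using tendsto_divide_zero[OF elim, of 2] by simp
  have SB: "eventually (\<lambda>k.
        entropy_pmf p \<le> r k + 2 * M + e k \<and>
        entropy_pmf p \<le> 2 * r k + M + e k \<and>
        entropy_pmf p + entropy_pmf (map_pmf fst p) \<le> 2 * r k + 2 * M + e k \<and>
        entropy_pmf p + entropy_pmf (map_pmf snd p) \<le> 2 * r k + 2 * M + e k) sequentially"
    using evn
  proof eventually_elim
    case (elim k)
    note sb = scheme_bounds[OF elim v[of k], where p = p]
    show ?case using sb unfolding r_def e_def c_def by simp
  qed
  show "entropy_pmf p - 2 * M \<le> R"
    by (rule limit_le[OF _ elim ls[folded r_def]]) (use SB in \<open>eventually_elim, elim conjE, linarith\<close>)
  have "eventually (\<lambda>k. (entropy_pmf p - M) / 2 \<le> r k + e k / 2) sequentially"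
    using SB
  proof eventually_elim
    case (elim k)
    have "(entropy_pmf p - M) / 2 * 2 = entropy_pmf p - M" "e k / 2 * 2 = e k" by simp_all
    then show ?case using elim by linarith
  qed
  then show "(entropy_pmf p - M) / 2 \<le> R"
    by (rule limit_le[OF _ elim2 ls[folded r_def]])
  have "eventually (\<lambda>k. (entropy_pmf p + entropy_pmf (map_pmf fst p)) / 2 - M \<le> r k + e k / 2) sequentially"
    using SB
  proof eventually_elim
    case (elim k)
    have "(entropy_pmf p + entropy_pmf (map_pmf fst p)) / 2 * 2 = entropy_pmf p + entropy_pmf (map_pmf fst p)" "e k / 2 * 2 = e k" by simp_all
    then show ?case using elim by linarith
  qed
  then show "(entropy_pmf p + entropy_pmf (map_pmf fst p)) / 2 - M \<le> R"
    by (rule limit_le[OF _ elim2 ls[folded r_def]])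
  have "eventually (\<lambda>k. (entropy_pmf p + entropy_pmf (map_pmf snd p)) / 2 - M \<le> r k + e k / 2) sequentially"
    using SB
  proof eventually_elim
    case (elim k)
    have "(entropy_pmf p + entropy_pmf (map_pmf snd p)) / 2 * 2 = entropy_pmf p + entropy_pmf (map_pmf snd p)" "e k / 2 * 2 = e k" by simp_all
    then show ?case using elim by linarith
  qed
  then show "(entropy_pmf p + entropy_pmf (map_pmf snd p)) / 2 - M \<le> R"
    by (rule limit_le[OF _ elim2 ls[folded r_def]])
qed



theorem theorem1:
  fixes p :: "('a::finite \<times> 'b::finite) pmf" and M :: real
  assumes "M \<ge> 0"
  shows "ereal (RLB p M) \<le> Rstar p M"
proof -
  define H where "H = entropy_pmf p"
  define H1 where "H1 = entropy_pmf (map_pmf fst p)"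
  define H2 where "H2 = entropy_pmf (map_pmf snd p)"
  define f where "f m = max (max (H - 2 * m) ((H - m) / 2)) ((H + max H1 H2) / 2 - m)" for m :: real
  have "{R. R \<ge> entropy_pmf p - 2 * M \<and> R \<ge> (entropy_pmf p - M) / 2 \<and>
           R \<ge> (entropy_pmf p + max (entropy_pmf (map_pmf fst p)) (entropy_pmf (map_pmf snd p))) / 2 - M}
        = {f M..}"
    unfolding f_def H_def H1_def H2_def by auto
  then have RLB: "RLB p M = f M" unfolding RLB_def by simp
  have ach: "f m \<le> R" if "achievable p R m" for R m
  proof -
    note b = achievable_bounds[OF that]
    have "(H + max H1 H2) / 2 - m \<le> R"
      using b(3,4) unfolding H_def H1_def H2_def by (cases "H1 \<le> H2") (auto simp: max_def)
    then show ?thesis using b(1,2) unfolding f_def H_def by simp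
  qed
  have contf: "continuous_on UNIV f" unfolding f_def by (intro continuous_intros) auto
  have closedT: "closed {x :: real \<times> real. f (snd x) \<le> fst x}"
  proof (rule closed_Collect_le)
    show "continuous_on UNIV (\<lambda>x::real \<times> real. f (snd x))"
      by (rule continuous_on_compose2[OF contf continuous_on_snd[OF continuous_on_id]]) auto
  qed (intro continuous_intros)
  have "region p \<subseteq> {x :: real \<times> real. f (snd x) \<le> fst x}"
    unfolding region_def by (rule closure_minimal[OF _ closedT]) (auto intro: ach)
  then have "\<And>R. (R, M) \<in> region p \<Longrightarrow> f M \<le> R" by auto
  then show ?thesis unfolding Rstar_def RLB by (auto intro!: Inf_greatest)
qed


end
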